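(* Let $G$ be a group with a RAAG-like action (in the sense defined below) on a CAT(0) cube complex $X$. Then every element $h\in G$ that acts non-trivially on $X$ is hyperbolic, i.e. fixes no vertex of $X$.
   Context: Let $X$ be a CAT(0) cube complex with set of halfspaces $\mathcal{H}(X)$; for $\Phi\in\mathcal{H}(X)$, $\overline{\Phi}$ denotes the complementary halfspace. Two halfspaces $\Phi,\Psi$ are nested if one of $\Phi\subseteq\Psi$, $\overline{\Phi}\subseteq\Psi$, $\Phi\subseteq\overline{\Psi}$, $\overline{\Phi}\subseteq\overline{\Psi}$ holds, and transverse otherwise. We write $\Phi\subsetneq\Psi$ tightly (or say $\Phi,\Psi$ are tightly nested) if $\Phi\subsetneq\Psi$ and there is no halfspace $\Phi'$ with $\Phi\subsetneq\Phi'\subsetneq\Psi$; more generally two distinct nested halfspaces are tightly nested if the corresponding strict inclusion among $\Phi,\overline\Phi,\Psi,\overline\Psi$ admits no intermediate halfspace. An action of a group $G$ by cubical automorphisms on $X$ is RAAG-like if: (i) there are no $\Phi\in\mathcal{H}(X)$, $h\in G$ with $h\overline{\Phi}=\Phi$; (ii) there are no $\Phi\in\mathcal{H}(X)$, $h\in G$ with $\Phi$ and $h\Phi$ transverse; (iii) there are no tightly nested $\Phi,\Phi'\in\mathcal{H}(X)$ and $h\in G$ with $\Phi$ and $h\Phi'$ transverse; (iv) there are no $\Phi\in\mathcal{H}(X)$, $h\in G$ with $\Phi\subsetneq h\overline{\Phi}$ tightly. *)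

theory Defs
  imports "HOL-Algebra.Group_Action"
begin

text \<open>A CAT(0) cube complex is represented by its 1-skeleton, which is a median graph
  (Chepoi / Roller / Gerasimov): vertex set V, symmetric irreflexive edge relation E on V.\<close>

definition is_walk :: "'v set \<Rightarrow> ('v \<Rightarrow> 'v \<Rightarrow> bool) \<Rightarrow> 'v list \<Rightarrow> bool" where
  "is_walk V E p \<longleftrightarrow> p \<noteq> [] \<and> set p \<subseteq> V \<and> (\<forall>i. Suc i < length p \<longrightarrow> E (p ! i) (p ! Suc i))"

definition gdist :: "'v set \<Rightarrow> ('v \<Rightarrow> 'v \<Rightarrow> bool) \<Rightarrow> 'v \<Rightarrow> 'v \<Rightarrow> nat" where
  "gdist V E u v = (LEAST n. \<exists>p. is_walk V E p \<and> hd p = u \<and> last p = v \<and> length p = Suc n)"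

definition graph_connected :: "'v set \<Rightarrow> ('v \<Rightarrow> 'v \<Rightarrow> bool) \<Rightarrow> bool" where
  "graph_connected V E \<longleftrightarrow> (\<forall>u\<in>V. \<forall>v\<in>V. \<exists>p. is_walk V E p \<and> hd p = u \<and> last p = v)"

definition between :: "'v set \<Rightarrow> ('v \<Rightarrow> 'v \<Rightarrow> bool) \<Rightarrow> 'v \<Rightarrow> 'v \<Rightarrow> 'v \<Rightarrow> bool" where
  "between V E x m y \<longleftrightarrow> gdist V E x m + gdist V E m y = gdist V E x y"

definition median_graph :: "'v set \<Rightarrow> ('v \<Rightarrow> 'v \<Rightarrow> bool) \<Rightarrow> bool" where
  "median_graph V E \<longleftrightarrow>
     (\<forall>u v. E u v \<longrightarrow> u \<in> V \<and> v \<in> V) \<and>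
     (\<forall>u v. E u v \<longrightarrow> E v u) \<and>
     (\<forall>u. \<not> E u u) \<and>
     graph_connected V E \<and>
     (\<forall>x\<in>V. \<forall>y\<in>V. \<forall>z\<in>V. \<exists>!m. m \<in> V \<and> between V E x m y \<and> between V E y m z \<and> between V E x m z)"

text \<open>Halfspaces: for an edge uv, the side of the hyperplane dual to uv containing u.\<close>
definition halfspace_of_edge :: "'v set \<Rightarrow> ('v \<Rightarrow> 'v \<Rightarrow> bool) \<Rightarrow> 'v \<Rightarrow> 'v \<Rightarrow> 'v set" where
  "halfspace_of_edge V E u v = {w \<in> V. gdist V E w u < gdist V E w v}"

definition halfspaces :: "'v set \<Rightarrow> ('v \<Rightarrow> 'v \<Rightarrow> bool) \<Rightarrow> 'v set set" where
  "halfspaces V E = {halfspace_of_edge V E u v | u v. E u v}"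

definition hcompl :: "'v set \<Rightarrow> 'v set \<Rightarrow> 'v set" where
  "hcompl V A = V - A"

definition nested :: "'v set \<Rightarrow> 'v set \<Rightarrow> 'v set \<Rightarrow> bool" where
  "nested V A B \<longleftrightarrow> A \<subseteq> B \<or> hcompl V A \<subseteq> B \<or> A \<subseteq> hcompl V B \<or> hcompl V A \<subseteq> hcompl V B"

definition transverse :: "'v set \<Rightarrow> 'v set \<Rightarrow> 'v set \<Rightarrow> bool" where
  "transverse V A B \<longleftrightarrow> \<not> nested V A B"

definition tight_incl :: "'v set \<Rightarrow> ('v \<Rightarrow> 'v \<Rightarrow> bool) \<Rightarrow> 'v set \<Rightarrow> 'v set \<Rightarrow> bool" where
  "tight_incl V E A B \<longleftrightarrow> A \<subset> B \<and> \<not> (\<exists>C \<in> halfspaces V E. A \<subset> C \<and> C \<subset> B)"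

definition tightly_nested :: "'v set \<Rightarrow> ('v \<Rightarrow> 'v \<Rightarrow> bool) \<Rightarrow> 'v set \<Rightarrow> 'v set \<Rightarrow> bool" where
  "tightly_nested V E A B \<longleftrightarrow> A \<noteq> B \<and> nested V A B \<and>
     (\<exists>A' \<in> {A, hcompl V A}. \<exists>B' \<in> {B, hcompl V B}. tight_incl V E A' B')"

definition cubical_action :: "('g, 'b) monoid_scheme \<Rightarrow> 'v set \<Rightarrow> ('v \<Rightarrow> 'v \<Rightarrow> bool) \<Rightarrow> ('g \<Rightarrow> 'v \<Rightarrow> 'v) \<Rightarrow> bool" where
  "cubical_action G V E act \<longleftrightarrow> group_action G V act \<and>
     (\<forall>h \<in> carrier G. \<forall>u\<in>V. \<forall>v\<in>V. E u v \<longleftrightarrow> E (act h u) (act h v))"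

definition raag_like :: "('g, 'b) monoid_scheme \<Rightarrow> 'v set \<Rightarrow> ('v \<Rightarrow> 'v \<Rightarrow> bool) \<Rightarrow> ('g \<Rightarrow> 'v \<Rightarrow> 'v) \<Rightarrow> bool" where
  "raag_like G V E act \<longleftrightarrow>
     cubical_action G V E act \<and>
     \<not> (\<exists>P \<in> halfspaces V E. \<exists>h \<in> carrier G. act h ` (hcompl V P) = P) \<and>
     \<not> (\<exists>P \<in> halfspaces V E. \<exists>h \<in> carrier G. transverse V P (act h ` P)) \<and>
     \<not> (\<exists>P \<in> halfspaces V E. \<exists>P' \<in> halfspaces V E. \<exists>h \<in> carrier G.
           tightly_nested V E P P' \<and> transverse V P (act h ` P')) \<and>
     \<not> (\<exists>P \<in> halfspaces V E. \<exists>h \<in> carrier G. tight_incl V E P (act h ` (hcompl V P)))"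

end

theory Submission imports Defs begin

lemma walk_single[simp]: "is_walk V E [x] \<longleftrightarrow> x \<in> V"
  by (simp add: is_walk_def)

lemma walk_cons2[simp]: "is_walk V E (x # y # p) \<longleftrightarrow> x \<in> V \<and> E x y \<and> is_walk V E (y # p)"
proof
  assume H: "is_walk V E (x # y # p)"
  have "\<forall>i. Suc i < length (y#p) \<longrightarrow> E ((y#p) ! i) ((y#p) ! Suc i)"
  proof (intro allI impI)
    fix i assume "Suc i < length (y#p)"
    then have "Suc (Suc i) < length (x#y#p)" by simp
    then show "E ((y#p) ! i) ((y#p) ! Suc i)" using H unfolding is_walk_def by fastforce
  qed
  then show "x \<in> V \<and> E x y \<and> is_walk V E (y # p)" using H unfolding is_walk_def by force
next
  assume H: "x \<in> V \<and> E x y \<and> is_walk V E (y # p)"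
  show "is_walk V E (x # y # p)" unfolding is_walk_def
  proof (intro conjI allI impI)
    fix i assume i: "Suc i < length (x # y # p)"
    show "E ((x # y # p) ! i) ((x # y # p) ! Suc i)"
    proof (cases i)
      case 0 then show ?thesis using H by simp
    next
      case (Suc j) then show ?thesis using H i unfolding is_walk_def by auto
    qed
  qed (use H in \<open>auto simp: is_walk_def\<close>)
qed

lemma walk_nonempty: "is_walk V E p \<Longrightarrow> p \<noteq> []" by (simp add: is_walk_def)

lemma walk_append:
  "is_walk V E p \<Longrightarrow> is_walk V E q \<Longrightarrow> last p = hd q \<Longrightarrow> is_walk V E (p @ tl q)"
proof (induction p rule: induct_list012)
  case 1 then show ?case by (simp add: is_walk_def)
next
  case (2 x) then show ?case by (cases q) auto
next
  case (3 x y r)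
  then show ?case by auto
qed

lemma walk_tl: "is_walk V E (x # y # p) \<Longrightarrow> is_walk V E (y # p)" by simp

lemma walk_rev:
  assumes sym: "\<And>u v. E u v \<Longrightarrow> E v u"
  shows "is_walk V E p \<Longrightarrow> is_walk V E (rev p)"
proof (induction p rule: induct_list012)
  case 1 then show ?case by (simp add: is_walk_def)
next
  case (2 x) then show ?case by simp
next
  case (3 x y r)
  have a: "is_walk V E (rev (y # r))" using 3 by simp
  have b: "is_walk V E [y, x]" using 3 sym by (auto simp: is_walk_def)
  have "is_walk V E (rev (y # r) @ tl [y, x])" by (rule walk_append[OF a b]) simp
  then show ?case by simp
qed

lemma walk_map:
  assumes "\<And>v. v \<in> V \<Longrightarrow> f v \<in> V" "\<And>u v. u \<in> V \<Longrightarrow> v \<in> V \<Longrightarrow> E u v \<Longrightarrow> E (f u) (f v)"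
  shows "is_walk V E p \<Longrightarrow> is_walk V E (map f p)"
proof (induction p rule: induct_list012)
  case 1 then show ?case by (simp add: is_walk_def)
next
  case (2 x) then show ?case using assms by simp
next
  case (3 x y r)
  have h: "x \<in> V" "E x y" "is_walk V E (y # r)" using 3(3) by simp_all
  have y: "y \<in> V" using h(3) by (simp add: is_walk_def)
  have "is_walk V E (map f (y # r))" using 3(2) h(3) by simp
  then show ?case using assms h y by simp
qed


context
  fixes V :: "'v set" and E :: "'v \<Rightarrow> 'v \<Rightarrow> bool"
  assumes MG: "median_graph V E"
begin

lemma Ein: "E u v \<Longrightarrow> u \<in> V" "E u v \<Longrightarrow> v \<in> V" using MG by (auto simp: median_graph_def)
lemma Esym: "E u v \<Longrightarrow> E v u" using MG by (auto simp: median_graph_def)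
lemma Eirr: "\<not> E u u" using MG by (auto simp: median_graph_def)

lemma d_walk: assumes "u \<in> V" "v \<in> V"
  shows "\<exists>p. is_walk V E p \<and> hd p = u \<and> last p = v \<and> length p = Suc (gdist V E u v)"
proof -
  have gc: "graph_connected V E" using MG by (simp add: median_graph_def)
  obtain p where p: "is_walk V E p" "hd p = u" "last p = v"
    using gc assms unfolding graph_connected_def by blast
  then have ex: "\<exists>n. \<exists>p. is_walk V E p \<and> hd p = u \<and> last p = v \<and> length p = Suc n"
    by (intro exI[of _ "length p - 1"] exI[of _ p]) (auto simp: is_walk_def)
  show ?thesis unfolding gdist_def by (rule LeastI_ex[OF ex])
qed

lemma d_le: "is_walk V E p \<Longrightarrow> hd p = u \<Longrightarrow> last p = v \<Longrightarrow> length p = Suc n \<Longrightarrow> gdist V E u v \<le> n"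
  unfolding gdist_def by (rule Least_le) blast

lemma d_refl: "u \<in> V \<Longrightarrow> gdist V E u u = 0"
  using d_le[of "[u]" u u 0] by simp

lemma d_zero: assumes "u \<in> V" "v \<in> V" "gdist V E u v = 0" shows "u = v"
proof -
  obtain p where "is_walk V E p" "hd p = u" "last p = v" "length p = Suc 0"
    using d_walk[OF assms(1,2)] assms(3) by auto
  then show ?thesis by (cases p) auto
qed

lemma d_edge: assumes "E u v" shows "gdist V E u v = 1"
proof -
  have "gdist V E u v \<le> 1" using d_le[of "[u,v]" u v 1] assms Ein[OF assms] by simp
  moreover have "gdist V E u v \<noteq> 0" using d_zero Ein[OF assms] assms Eirr by metis
  ultimately show ?thesis by simp
qed

lemma d_one: assumes "u \<in> V" "v \<in> V" "gdist V E u v = 1" shows "E u v"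
proof -
  obtain p where p: "is_walk V E p" "hd p = u" "last p = v" "length p = Suc 1"
    using d_walk[OF assms(1,2)] assms(3) by auto
  then obtain a b where "p = [a,b]" by (cases p; cases "tl p") auto
  then show ?thesis using p by simp
qed

lemma d_tri: assumes "u \<in> V" "v \<in> V" "w \<in> V"
  shows "gdist V E u w \<le> gdist V E u v + gdist V E v w"
proof -
  obtain p where p: "is_walk V E p" "hd p = u" "last p = v" "length p = Suc (gdist V E u v)"
    using d_walk assms by blast
  obtain q where q: "is_walk V E q" "hd q = v" "last q = w" "length q = Suc (gdist V E v w)"
    using d_walk assms by blast
  have w: "is_walk V E (p @ tl q)" using walk_append[OF p(1) q(1)] p q by simp
  have "p \<noteq> []" "q \<noteq> []" using p q by (auto simp: is_walk_def)
  have h1: "hd (p @ tl q) = u" using p \<open>p \<noteq> []\<close> by simp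
  have h2: "last (p @ tl q) = w"
  proof (cases "tl q = []")
    case True then show ?thesis using p q \<open>q \<noteq> []\<close> by (metis append.right_neutral hd_Nil_eq_last last_ConsL list.collapse)
  next
    case False then show ?thesis using q by (simp add: last_tl)
  qed
  have h3: "length (p @ tl q) = Suc (gdist V E u v + gdist V E v w)" using p q by simp
  note h = h1 h2 h3
  then show ?thesis using d_le[OF w h] by blast
qed

lemma d_sym: assumes "u \<in> V" "v \<in> V" shows "gdist V E u v = gdist V E v u"
proof -
  have *: "gdist V E b a \<le> gdist V E a b" if ab: "a \<in> V" "b \<in> V" for a b
  proof -
    obtain p where p: "is_walk V E p" "hd p = a" "last p = b" "length p = Suc (gdist V E a b)"
      using d_walk[OF ab] by blast
    have "p \<noteq> []" using p by (auto simp: is_walk_def)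
    then have "is_walk V E (rev p)" "hd (rev p) = b" "last (rev p) = a" "length (rev p) = Suc (gdist V E a b)"
      using p walk_rev[OF Esym] by (auto simp: hd_rev last_rev)
    then show ?thesis using d_le by blast
  qed
  show ?thesis using *[OF assms] *[OF assms(2,1)] by simp
qed

lemma d_step: assumes "u \<in> V" "v \<in> V" "gdist V E u v = Suc n"
  shows "\<exists>u'. E u u' \<and> gdist V E u' v = n"
proof -
  obtain p where p: "is_walk V E p" "hd p = u" "last p = v" "length p = Suc (Suc n)"
    using d_walk[OF assms(1,2)] assms(3) by auto
  then obtain a b r where pr: "p = a # b # r" by (cases p; cases "tl p") auto
  have e: "E u b" "is_walk V E (b # r)" using p pr by auto
  have "gdist V E b v \<le> n" using d_le[OF e(2)] p pr by simp
  moreover have "gdist V E u v \<le> gdist V E u b + gdist V E b v" using d_tri assms Ein[OF e(1)] by blast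
  ultimately show ?thesis using e d_edge[OF e(1)] assms by (intro exI[of _ b]) auto
qed


abbreviation dd where "dd \<equiv> gdist V E"

lemma med_ex: assumes "x \<in> V" "y \<in> V" "z \<in> V"
  shows "\<exists>m\<in>V. dd x m + dd m y = dd x y \<and> dd y m + dd m z = dd y z \<and> dd x m + dd m z = dd x z"
  using MG assms unfolding median_graph_def between_def by metis

lemma med_uniq: assumes "x \<in> V" "y \<in> V" "z \<in> V" "m \<in> V" "m' \<in> V"
  "dd x m + dd m y = dd x y" "dd y m + dd m z = dd y z" "dd x m + dd m z = dd x z"
  "dd x m' + dd m' y = dd x y" "dd y m' + dd m' z = dd y z" "dd x m' + dd m' z = dd x z"
  shows "m = m'"
proof -
  have "\<exists>!m. m \<in> V \<and> between V E x m y \<and> between V E y m z \<and> between V E x m z"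
    using MG assms(1-3) unfolding median_graph_def by blast
  then show ?thesis using assms unfolding between_def by blast
qed

lemma BIP: assumes "E a b" "z \<in> V" shows "dd z a \<noteq> dd z b"
proof -
  have a: "a \<in> V" and b: "b \<in> V" using Ein assms by auto
  obtain m where m: "m \<in> V" "dd z m + dd m a = dd z a" "dd a m + dd m b = dd a b" "dd z m + dd m b = dd z b"
    using med_ex[OF assms(2) a b] by blast
  have ab: "dd a b = 1" "dd b a = 1" using d_edge assms Esym by auto
  then have "dd a m = 0 \<or> dd m b = 0" using m by linarith
  then have "m = a \<or> m = b" using d_zero a b m(1) by metis
  then show ?thesis
  proof
    assume "m = a" then show ?thesis using m ab d_refl a by auto
  next
    assume "m = b" then show ?thesis using m ab d_refl b by auto
  qed
qed

lemma ADJ: assumes "E p q" "z \<in> V" shows "dd z q = dd z p + 1 \<or> dd z p = dd z q + 1"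
proof -
  have p: "p \<in> V" and q: "q \<in> V" using Ein assms by auto
  have "dd z q \<le> dd z p + dd p q" "dd z p \<le> dd z q + dd q p" using d_tri p q assms by auto
  moreover have "dd p q = 1" "dd q p = 1" using d_edge assms Esym by auto
  moreover have "dd z p \<noteq> dd z q" using BIP assms by auto
  ultimately show ?thesis by linarith
qed

lemma D2: assumes "a \<noteq> b" "E p a" "E p b" shows "dd a b = 2"
proof -
  have V: "a \<in> V" "b \<in> V" "p \<in> V" using Ein assms by auto
  have "dd a b \<le> dd a p + dd p b" using d_tri V by auto
  moreover have "dd a p = 1" "dd p b = 1" "dd p a = 1" using d_edge assms Esym by auto
  moreover have "dd a b \<noteq> 0" using d_zero V assms by auto
  moreover have "dd a b \<noteq> 1"
  proof
    assume "dd a b = 1"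
    then have "E a b" using d_one V by auto
    then show False using BIP[OF _ V(3), of a b] \<open>dd p b = 1\<close> \<open>dd p a = 1\<close> by simp
  qed
  ultimately show ?thesis by linarith
qed

lemma K23: assumes "p \<noteq> q" "c1 \<noteq> c2" "c1 \<noteq> c3" "c2 \<noteq> c3"
  "E p c1" "E q c1" "E p c2" "E q c2" "E p c3" "E q c3"
  shows False
proof -
  have V: "p \<in> V" "q \<in> V" "c1 \<in> V" "c2 \<in> V" "c3 \<in> V" using Ein assms by auto
  have d2: "dd c1 c2 = 2" "dd c2 c3 = 2" "dd c1 c3 = 2" using D2 assms by auto
  have e: "dd c1 p = 1" "dd p c2 = 1" "dd c2 p = 1" "dd p c3 = 1"
          "dd c1 q = 1" "dd q c2 = 1" "dd c2 q = 1" "dd q c3 = 1"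
    using d_edge assms Esym by auto
  show False using med_uniq[OF V(3,4,5,1,2)] d2 e assms(1) by auto
qed

lemma QUAD: assumes "u \<in> V" "v \<noteq> w" "E x v" "E x w" "dd u v + 1 = dd u x" "dd u w + 1 = dd u x"
  shows "\<exists>t. E v t \<and> E w t \<and> dd u t + 2 = dd u x"
proof -
  have V: "v \<in> V" "w \<in> V" "x \<in> V" using Ein assms by auto
  have d2: "dd v w = 2" using D2 assms by auto
  obtain m where m: "m \<in> V" "dd u m + dd m v = dd u v" "dd v m + dd m w = dd v w" "dd u m + dd m w = dd u w"
    using med_ex[OF assms(1) V(1,2)] by blast
  have "dd v m \<noteq> 0"
  proof
    assume "dd v m = 0" then have "m = v" using d_zero V m by auto
    then show False using m d2 d_refl V assms by auto
  qed
  moreover have "dd m w \<noteq> 0"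
  proof
    assume "dd m w = 0" then have "m = w" using d_zero V m by auto
    then show False using m d2 d_refl V assms by (auto simp: d_sym)
  qed
  ultimately have "dd v m = 1" "dd m w = 1" using m d2 by auto
  moreover have "dd m v = dd v m" using d_sym m V by auto
  ultimately show ?thesis using d_one[of v m] d_one[of m w] Esym m V assms
    by (intro exI[of _ m]) auto
qed


lemma LC: "E a b \<Longrightarrow> dd x a = k \<Longrightarrow> z \<in> V \<Longrightarrow> dd z a < dd z b \<Longrightarrow> dd x a < dd x b
  \<Longrightarrow> dd y b < dd y a \<Longrightarrow> E x y \<Longrightarrow> dd z y + 1 = dd z x \<Longrightarrow> False"
proof (induction k arbitrary: x y z)
  case 0
  have V: "a \<in> V" "b \<in> V" "x \<in> V" "y \<in> V" using Ein 0 by auto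
  have "x = a" using d_zero 0 V by auto
  then have "dd y a = 1" using d_edge Esym 0 by auto
  then have "dd y b = 0" using 0 by auto
  then have "y = b" using d_zero V by auto
  then show False using 0 \<open>x = a\<close> by auto
next
  case (Suc k)
  have V: "a \<in> V" "b \<in> V" "x \<in> V" "y \<in> V" using Ein Suc.prems by auto
  obtain x1 where x1: "E x x1" "dd x1 a = k" using d_step[OF V(3,1) Suc.prems(2)] by blast
  have V1: "x1 \<in> V" using Ein x1 by auto
  have s: "dd a x = dd x a" "dd b x = dd x b" "dd a y = dd y a" "dd b y = dd y b"
     "dd a x1 = dd x1 a" "dd b x1 = dd x1 b"
    using d_sym V V1 by auto
  have xb: "dd x b = Suc k + 1" using ADJ[OF Suc.prems(1) V(3)] Suc.prems by auto
  have "dd y b = Suc k \<and> dd y a = Suc k + 1"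
    using ADJ[OF Suc.prems(7) V(1)] ADJ[OF Suc.prems(7) V(2)] ADJ[OF Suc.prems(1) V(4)] s xb Suc.prems(2,6)
    by arith
  then have "dd y b = Suc k" "dd y a = Suc k + 1" by auto
  note ya = this
  have x1b: "dd x1 b = Suc k"
    using ADJ[OF x1(1) V(2)] ADJ[OF Suc.prems(1) V1] s xb x1(2) by arith
  have "x1 \<noteq> y" using x1(2) ya by auto
  then obtain y1 where y1: "E x1 y1" "E y y1" "dd b y1 + 2 = dd b x"
    using QUAD[OF V(2) \<open>x1 \<noteq> y\<close> x1(1) Suc.prems(7)] s xb x1b ya by auto
  have V2: "y1 \<in> V" using Ein y1 by auto
  have s2: "dd b y1 = dd y1 b" "dd a y1 = dd y1 a" using d_sym V V2 by auto
  have "dd y1 b = k \<and> dd y1 a = Suc k"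
    using y1(3) s2 s xb ADJ[OF y1(2) V(1)] ADJ[OF Suc.prems(1) V2] ya by arith
  then have y1a: "dd y1 b = k" "dd y1 a = Suc k" by auto
  have IH: "dd z y1 + 1 = dd z x1 \<Longrightarrow> False"
    using Suc.IH[OF Suc.prems(1) x1(2) Suc.prems(3,4) _ _ y1(1)] x1(2) x1b y1a by simp
  have A1: "dd z x1 = dd z x + 1 \<or> dd z x = dd z x1 + 1" using ADJ[OF x1(1) Suc.prems(3)] .
  have A2: "dd z y1 = dd z x1 + 1 \<or> dd z x1 = dd z y1 + 1" using ADJ[OF y1(1) Suc.prems(3)] .
  have A3: "dd z y1 = dd z y + 1 \<or> dd z y = dd z y1 + 1" using ADJ[OF y1(2) Suc.prems(3)] .
  show False
  proof (cases "dd z x1 = dd z x + 1")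
    case True
    then show False using A2 A3 IH Suc.prems(8) by linarith
  next
    case False
    then have c: "dd z x = dd z x1 + 1" using A1 by auto
    show False
    proof (cases "dd z x1 = dd z y1 + 1")
      case True then show False using IH by auto
    next
      case False
      then have c2: "dd z y1 = dd z x1 + 1" using A2 by auto
      obtain t where t: "E x1 t" "E y t" "dd z t + 2 = dd z y1"
        using QUAD[OF Suc.prems(3) \<open>x1 \<noteq> y\<close> Esym[OF y1(1)] Esym[OF y1(2)]] c c2 Suc.prems(8)
        by auto
      have "x \<noteq> y1" using xb y1a by auto
      moreover have "x \<noteq> t" "y1 \<noteq> t" using t(3) c c2 Suc.prems(8) by auto
      ultimately show False
        using K23[OF \<open>x1 \<noteq> y\<close> _ _ _ Esym[OF x1(1)] Esym[OF Suc.prems(7)] y1(1) y1(2) t(1) t(2)]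
        by blast
    qed
  qed
qed

lemma CUT: assumes "E a b" "E x y" "dd x a < dd x b" "\<not> dd y a < dd y b"
  shows "halfspace_of_edge V E a b = halfspace_of_edge V E x y"
proof -
  have V: "a \<in> V" "b \<in> V" "x \<in> V" "y \<in> V" using Ein assms by auto
  have yb: "dd y b < dd y a" using assms(4) BIP[OF assms(1) V(4)] by auto
  have "z \<in> V \<Longrightarrow> dd z a < dd z b \<longleftrightarrow> dd z x < dd z y" for z
  proof -
    assume z: "z \<in> V"
    show ?thesis
    proof (cases "dd z a < dd z b")
      case True
      have "dd z x < dd z y"
      proof (rule ccontr)
        assume "\<not> dd z x < dd z y"
        then have "dd z y + 1 = dd z x" using ADJ[OF assms(2) z] by auto
        then show False using LC[OF assms(1) refl z True assms(3) yb assms(2)] by auto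
      qed
      then show ?thesis using True by auto
    next
      case False
      then have zb: "dd z b < dd z a" using BIP[OF assms(1) z] by auto
      have "\<not> dd z x < dd z y"
      proof
        assume "dd z x < dd z y"
        then have "dd z x + 1 = dd z y" using ADJ[OF assms(2) z] by auto
        then show False using LC[OF Esym[OF assms(1)] refl z zb yb assms(3) Esym[OF assms(2)]] by auto
      qed
      then show ?thesis using False by auto
    qed
  qed
  then show ?thesis unfolding halfspace_of_edge_def by auto
qed

lemma COMPL: assumes "E p q" shows "V - halfspace_of_edge V E q p = halfspace_of_edge V E p q"
proof -
  have "z \<in> V \<Longrightarrow> \<not> dd z q < dd z p \<longleftrightarrow> dd z p < dd z q" for z
    using BIP[OF assms, of z] by auto
  then show ?thesis unfolding halfspace_of_edge_def by auto
qed

end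

lemma act_dist_le:
  assumes MG: "median_graph V E" and GA: "group_action G V act"
    and pres: "\<forall>h \<in> carrier G. \<forall>u\<in>V. \<forall>v\<in>V. E u v \<longleftrightarrow> E (act h u) (act h v)"
    and g: "g \<in> carrier G" and uv: "u \<in> V" "v \<in> V"
  shows "gdist V E (act g u) (act g v) \<le> gdist V E u v"
proof -
  obtain p where p: "is_walk V E p" "hd p = u" "last p = v" "length p = Suc (gdist V E u v)"
    using d_walk[OF MG uv] by blast
  have ne: "p \<noteq> []" using p by (auto simp: is_walk_def)
  have "is_walk V E (map (act g) p)"
  proof (rule walk_map[OF _ _ p(1)])
    show "\<And>v. v \<in> V \<Longrightarrow> act g v \<in> V" using group_action.element_image[OF GA g] by blast
    show "\<And>u v. u \<in> V \<Longrightarrow> v \<in> V \<Longrightarrow> E u v \<Longrightarrow> E (act g u) (act g v)" using pres g by blast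
  qed
  moreover have "hd (map (act g) p) = act g u" "last (map (act g) p) = act g v"
    "length (map (act g) p) = Suc (gdist V E u v)" using p ne by (auto simp: hd_map last_map)
  ultimately show ?thesis using d_le[OF MG] by blast
qed

lemma act_dist:
  assumes MG: "median_graph V E" and GA: "group_action G V act" and grp: "group G"
    and pres: "\<forall>h \<in> carrier G. \<forall>u\<in>V. \<forall>v\<in>V. E u v \<longleftrightarrow> E (act h u) (act h v)"
    and g: "g \<in> carrier G" and uv: "u \<in> V" "v \<in> V"
  shows "gdist V E (act g u) (act g v) = gdist V E u v"
proof -
  have ig: "inv\<^bsub>G\<^esub> g \<in> carrier G" using grp g by (simp add: group.inv_closed)
  have gu: "act g u \<in> V" "act g v \<in> V" using group_action.element_image[OF GA g] uv by blast+
  have "act (inv\<^bsub>G\<^esub> g) (act g u) = u" "act (inv\<^bsub>G\<^esub> g) (act g v) = v"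
    using group_action.orbit_sym_aux[OF GA g] uv by auto
  then show ?thesis using act_dist_le[OF MG GA pres g uv] act_dist_le[OF MG GA pres ig gu] by simp
qed

lemma find_edge:
  assumes MG: "median_graph V E" and GA: "group_action G V act" and h: "h \<in> carrier G"
    and v: "v \<in> V" "act h v = v"
  shows "x \<in> V \<Longrightarrow> gdist V E x v = n \<Longrightarrow> act h x \<noteq> x \<Longrightarrow> \<exists>u w. E u w \<and> act h u = u \<and> act h w \<noteq> w"
proof (induction n arbitrary: x)
  case 0
  then have "x = v" using d_zero[OF MG] v by auto
  then show ?case using 0 v by auto
next
  case (Suc n)
  obtain x' where x': "E x x'" "gdist V E x' v = n" using d_step[OF MG Suc.prems(1) v(1) Suc.prems(2)] by blast
  show ?case
  proof (cases "act h x' = x'")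
    case True then show ?thesis using Esym[OF MG x'(1)] Suc.prems by blast
  next
    case False then show ?thesis using Suc.IH[OF Ein(2)[OF MG x'(1)] x'(2)] by blast
  qed
qed

theorem lemma3p3:
  fixes G :: "('g, 'b) monoid_scheme"
    and V :: "'v set" and E :: "'v \<Rightarrow> 'v \<Rightarrow> bool" and act :: "'g \<Rightarrow> 'v \<Rightarrow> 'v"
  assumes "median_graph V E"
    and "group G"
    and "raag_like G V E act"
    and "h \<in> carrier G"
    and "\<exists>x \<in> V. act h x \<noteq> x"
  shows "\<forall>v \<in> V. act h v \<noteq> v"
proof (rule ccontr)
  note MG = assms(1) and grp = assms(2) and RL = assms(3) and hG = assms(4)
  assume "\<not> (\<forall>v \<in> V. act h v \<noteq> v)"
  then obtain v where v: "v \<in> V" "act h v = v" by blast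
  obtain x where x: "x \<in> V" "act h x \<noteq> x" using assms(5) by blast
  have CA: "cubical_action G V E act" using RL by (simp add: raag_like_def)
  have GA: "group_action G V act" using CA by (simp add: cubical_action_def)
  have pres: "\<forall>h \<in> carrier G. \<forall>u\<in>V. \<forall>v\<in>V. E u v \<longleftrightarrow> E (act h u) (act h v)"
    using CA by (simp add: cubical_action_def)
  obtain u w where uw: "E u w" "act h u = u" "act h w \<noteq> w"
    using find_edge[OF MG GA hG v x(1) refl x(2)] by blast
  have uV: "u \<in> V" and wV: "w \<in> V" using Ein[OF MG] uw by auto
  define hw where "hw = act h w"
  have hwV: "hw \<in> V" using group_action.element_image[OF GA hG wV] hw_def by blast
  have Euhw: "E u hw" using pres hG uV wV uw unfolding hw_def by metis
  have hww: "hw \<noteq> w" using uw hw_def by simp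
  define A where "A = halfspace_of_edge V E w u"
  define B where "B = halfspace_of_edge V E hw u"
  have AV: "A \<subseteq> V" "B \<subseteq> V" unfolding A_def B_def halfspace_of_edge_def by auto
  have Ah: "A \<in> halfspaces V E" unfolding A_def halfspaces_def using Esym[OF MG uw(1)] by blast
  have dist: "\<And>a b. a \<in> V \<Longrightarrow> b \<in> V \<Longrightarrow> gdist V E (act h a) (act h b) = gdist V E a b"
    using act_dist[OF MG GA grp pres hG] by blast
  have img: "act h ` A = B"
  proof
    show "act h ` A \<subseteq> B"
    proof
      fix z' assume "z' \<in> act h ` A"
      then obtain z where z: "z \<in> A" "z' = act h z" by blast
      have zV: "z \<in> V" using z AV by auto
      have "act h z \<in> V" using group_action.element_image[OF GA hG zV] by blast
      then show "z' \<in> B" using z zV dist[OF zV wV] dist[OF zV uV] uw(2)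
        unfolding A_def B_def halfspace_of_edge_def hw_def by auto
    qed
  next
    show "B \<subseteq> act h ` A"
    proof
      fix z' assume z': "z' \<in> B"
      then have "z' \<in> act h ` V" using group_action.surj_prop[OF GA hG] AV by auto
      then obtain z where z: "z \<in> V" "z' = act h z" by blast
      have "z \<in> A" using z z' dist[OF z(1) wV] dist[OF z(1) uV] uw(2)
        unfolding A_def B_def halfspace_of_edge_def hw_def by auto
      then show "z' \<in> act h ` A" using z by blast
    qed
  qed
  have imgc: "act h ` (hcompl V A) = V - B"
  proof -
    have "act h ` (V - A) = act h ` V - act h ` A"
      using inj_on_image_set_diff[OF group_action.inj_prop[OF GA hG] _ AV(1)] by blast
    then show ?thesis using group_action.surj_prop[OF GA hG] img by (simp add: hcompl_def)
  qed
  have d1: "gdist V E w u = 1" "gdist V E hw u = 1" "gdist V E u w = 1" "gdist V E u hw = 1"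
    using d_edge[OF MG] uw(1) Euhw Esym[OF MG] by auto
  have wA: "w \<in> A" using wV d1 d_refl[OF MG wV] unfolding A_def halfspace_of_edge_def by auto
  have uA: "u \<notin> A" "u \<notin> B" using d1 d_refl[OF MG uV] unfolding A_def B_def halfspace_of_edge_def by auto
  have hwB: "hw \<in> B" using hwV d1 d_refl[OF MG hwV] unfolding B_def halfspace_of_edge_def by auto
  have wB: "w \<notin> B"
  proof
    assume "w \<in> B"
    then have "gdist V E w hw = 0" using d1 unfolding B_def halfspace_of_edge_def by auto
    then show False using d_zero[OF MG wV hwV] hww by auto
  qed
  have hwA: "hw \<notin> A"
  proof
    assume "hw \<in> A"
    then have "gdist V E hw w = 0" using d1 unfolding A_def halfspace_of_edge_def by auto
    then show False using d_zero[OF MG hwV wV] hww by auto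
  qed
  have "\<not> transverse V A (act h ` A)" using RL Ah hG unfolding raag_like_def by blast
  then have "nested V A B" using img by (simp add: transverse_def)
  then have AB: "A \<subseteq> V - B" unfolding nested_def hcompl_def using wA wB uA uV hwB hwA hwV by blast
  have "\<not> tight_incl V E A (act h ` (hcompl V A))" using RL Ah hG unfolding raag_like_def by blast
  then have "\<not> tight_incl V E A (V - B)" using imgc by simp
  moreover have "A \<subset> V - B" using AB uA uV by blast
  ultimately obtain C where C: "C \<in> halfspaces V E" "A \<subset> C" "C \<subset> V - B"
    unfolding tight_incl_def by blast
  then obtain a b where ab: "E a b" "C = halfspace_of_edge V E a b" unfolding halfspaces_def by blast
  have wC: "w \<in> C" using wA C by blast
  have hwC: "hw \<notin> C" using hwB C by blast
  show False
  proof (cases "u \<in> C")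
    case True
    have "C = halfspace_of_edge V E u hw"
      using CUT[OF MG ab(1) Euhw] True hwC hwV unfolding ab(2) halfspace_of_edge_def by auto
    also have "\<dots> = V - B" unfolding B_def using COMPL[OF MG Euhw] by simp
    finally show False using C by blast
  next
    case False
    have "C = halfspace_of_edge V E w u"
      using CUT[OF MG ab(1) Esym[OF MG uw(1)]] wC False uV unfolding ab(2) halfspace_of_edge_def by auto
    then show False using C A_def by blast
  qed
qed

end
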